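(* Let $0\le k\le n$ and $\sigma\in\mathcal D^S_k$. Then $$\sum_{\pi\in S_n,\ dp(\pi)=\sigma}(-1)^{\mathrm{inv}(\pi)}q^{\mathrm{maj}(\pi)}=(-1)^{\mathrm{inv}(\sigma)}q^{\mathrm{maj}(\sigma)}{n\brack k}_q.$$
   Context: $S_n$ is the symmetric group on $[n]$; $\mathcal D^S_k$ is the set of derangements in $S_k$ ($\sigma_i\ne i$ for all $i$), with $\mathcal D^S_0$ consisting of the empty word. $\mathrm{inv}(\sigma)=\#\{(i,j):i<j,\sigma_i>\sigma_j\}$, $\mathrm{maj}(\sigma)=\sum_{i:\sigma_i>\sigma_{i+1}}i$. For a word $w$ of distinct positive integers $a_1<\dots<a_m$, its reduction is obtained by replacing each $a_j$ by $j$. For $\pi\in S_n$, the derangement part $dp(\pi)$ is the reduction of the subword of $\pi$ consisting of the letters $\pi_i$ with $\pi_i\neq i$. $[m]_q=1+q+\dots+q^{m-1}$, $[m]_q!=[1]_q\cdots[m]_q$, $[0]_q!=1$, ${n\brack k}_q=\frac{[n]_q!}{[k]_q![n-k]_q!}$. *)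

theory Defs
  imports "HOL-Computational_Algebra.Polynomial"
begin

text \<open>Permutations of [n] in one-line notation, as lists (entry at 0-based index i is sigma_(i+1)).\<close>
definition perms :: "nat \<Rightarrow> nat list set" where
  "perms n = {xs. length xs = n \<and> set xs = {1..n}}"

definition derangements :: "nat \<Rightarrow> nat list set" where
  "derangements k = {s \<in> perms k. \<forall>i<k. s ! i \<noteq> Suc i}"

definition inversions :: "nat list \<Rightarrow> nat" where
  "inversions xs = card {(i, j). i < j \<and> j < length xs \<and> xs ! i > xs ! j}"

definition maj :: "nat list \<Rightarrow> nat" where
  "maj xs = (\<Sum>i \<in> {i. Suc i < length xs \<and> xs ! i > xs ! Suc i}. Suc i)"

definition reduction :: "nat list \<Rightarrow> nat list" where
  "reduction w = map (\<lambda>x. card {y \<in> set w. y \<le> x}) w"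

definition dp :: "nat list \<Rightarrow> nat list" where
  "dp p = reduction [p ! i. i \<leftarrow> [0..<length p], p ! i \<noteq> Suc i]"

definition qvar :: "int poly" where
  "qvar = monom 1 1"

definition qint :: "nat \<Rightarrow> int poly" where
  "qint m = (\<Sum>i<m. qvar ^ i)"

definition qfact :: "nat \<Rightarrow> int poly" where
  "qfact m = (\<Prod>i\<in>{1..m}. qint i)"

definition qbinom :: "nat \<Rightarrow> nat \<Rightarrow> int poly" where
  "qbinom n k = qfact n div (qfact k * qfact (n - k))"

end

theory Submission
  imports Defs
begin


lemma qint_add: "qint a + qvar ^ a * qint b = qint (a + b)"
proof (induction b)
  case 0 then show ?case by (simp add: qint_def)
next
  case (Suc b)
  have "qint (a + Suc b) = qint (a+b) + qvar ^ (a+b)" by (simp add: qint_def)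
  also have "\<dots> = qint a + qvar ^ a * qint b + qvar ^ (a+b)" using Suc by simp
  also have "\<dots> = qint a + qvar ^ a * qint (Suc b)"
    by (simp add: qint_def distrib_left power_add)
  finally show ?case by simp
qed

lemma qint_nonzero: "m \<ge> 1 \<Longrightarrow> qint m \<noteq> 0"
proof
  assume "m \<ge> 1" "qint m = 0"
  then have "poly (qint m) 1 = 0" by simp
  moreover have "poly (qint m) 1 = of_nat m" by (simp add: qint_def qvar_def poly_sum poly_monom)
  ultimately show False using \<open>m \<ge> 1\<close> by simp
qed

lemma qfact_nonzero: "qfact m \<noteq> 0"
  unfolding qfact_def using qint_nonzero by (simp add: prod_zero_iff)

lemma qfact_Suc: "qfact (Suc m) = qint (Suc m) * qfact m"
  unfolding qfact_def by (simp add: prod.atLeast1_atMost_eq prod.lessThan_Suc mult.commute)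

fun G :: "nat \<Rightarrow> nat \<Rightarrow> int poly" where
  "G n 0 = 1"
| "G 0 (Suc k) = 0"
| "G (Suc n) (Suc k) = G n k + qvar ^ Suc k * G n (Suc k)"

lemma G_zero: "k > n \<Longrightarrow> G n k = 0"
proof (induction n arbitrary: k)
  case 0 then show ?case by (cases k) auto
next
  case (Suc n) then show ?case by (cases k) auto
qed

lemma G_fact: "k \<le> n \<Longrightarrow> G n k * qfact k * qfact (n - k) = qfact n"
proof (induction n arbitrary: k)
  case 0 then show ?case by (simp add: qfact_def)
next
  case (Suc n)
  show ?case
  proof (cases k)
    case 0 then show ?thesis by (simp add: qfact_def)
  next
    case (Suc k')
    show ?thesis
    proof (cases "k' = n")
      case True
      have "G n n * qfact n = qfact n" using Suc.IH[of n] by (simp add: qfact_def)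
      then have "G n n = 1" using qfact_nonzero[of n]
        by (metis mult_cancel_right2)
      then show ?thesis using True Suc by (simp add: G_zero qfact_def)
    next
      case False
      then have kn: "k' < n" using Suc.prems Suc by simp
      have h1: "G n k' * qfact k' * qfact (n - k') = qfact n" using Suc.IH kn by simp
      have h2: "G n (Suc k') * qfact (Suc k') * qfact (n - Suc k') = qfact n" using Suc.IH kn by simp
      have e1: "qfact (n - k') = qint (n - k') * qfact (n - Suc k')"
        using kn qfact_Suc[of "n - Suc k'"] by (simp add: Suc_diff_Suc)
      have "G (Suc n) k * qfact k * qfact (Suc n - k)
          = (G n k' + qvar ^ Suc k' * G n (Suc k')) * qfact (Suc k') * qfact (n - k')"
        using Suc by simp
      also have "\<dots> = qint (Suc k') * (G n k' * qfact k' * qfact (n - k'))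
          + qvar ^ Suc k' * qint (n - k') * (G n (Suc k') * qfact (Suc k') * qfact (n - Suc k'))"
        by (simp add: qfact_Suc e1 algebra_simps)
      also have "\<dots> = qfact n * (qint (Suc k') + qvar ^ Suc k' * qint (n - k'))"
        using h1 h2 by (simp add: algebra_simps)
      also have "\<dots> = qfact n * qint (Suc n)" using qint_add[of "Suc k'" "n - k'"] kn by simp
      finally show ?thesis by (simp add: qfact_Suc mult.commute)
    qed
  qed
qed

lemma qbinom_G: "k \<le> n \<Longrightarrow> qbinom n k = G n k"
  unfolding qbinom_def using G_fact[of k n] qfact_nonzero
  by (metis mult.assoc nonzero_mult_div_cancel_right mult_eq_0_iff)

lemma slot_sum:
  fixes q :: "'a :: comm_semiring_1"
  assumes rN: "\<rho> (Suc N) = 0" and LN: "\<not> Lf (Suc N)"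
    and rstep: "\<And>p. 1 \<le> p \<Longrightarrow> p \<le> N \<Longrightarrow> \<rho> p = \<rho> (Suc p) + (if Lf (Suc p) then 0 else 1)"
    and V: "\<And>p. 1 \<le> p \<Longrightarrow> p \<le> Suc N \<Longrightarrow> V p = \<rho> p + (if Lf p then p - 1 else 0)"
  shows "(\<Sum>p\<in>{1..Suc N}. q ^ V p) = (\<Sum>i\<le>N. q ^ i)"
proof -
  define s where "s p = \<rho> p + (if Lf p then 0 else 1)" for p
  have inv: "(\<Sum>p'\<in>{p..Suc N}. q ^ V p') = (\<Sum>i<s p. q ^ i) + (\<Sum>i\<in>{p - 1 + s p..N}. q ^ i)
             \<and> s p \<le> N + 2 - p" if "1 \<le> p" "p \<le> Suc N" for p
    using that
  proof (induction "Suc N - p" arbitrary: p)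
    case 0
    then have p: "p = Suc N" by simp
    show ?case using p rN LN V[of "Suc N"] by (simp add: s_def)
  next
    case (Suc d)
    then have pN: "p \<le> N" by simp
    have IH: "(\<Sum>p'\<in>{Suc p..Suc N}. q ^ V p') = (\<Sum>i<s (Suc p). q ^ i) + (\<Sum>i\<in>{p + s (Suc p)..N}. q ^ i)
             \<and> s (Suc p) \<le> N + 1 - p"
      using Suc.hyps(1)[of "Suc p"] Suc.hyps(2) pN by simp
    have sp: "s (Suc p) = \<rho> p" using rstep[of p] Suc.prems pN by (simp add: s_def)
    have split: "(\<Sum>p'\<in>{p..Suc N}. q ^ V p') = q ^ V p + (\<Sum>p'\<in>{Suc p..Suc N}. q ^ V p')"
      using pN by (subst sum.atLeast_Suc_atMost) auto
    show ?case
    proof (cases "Lf p")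
      case True
      have Vp: "V p = p - 1 + s (Suc p)" using V[of p] Suc.prems True sp by simp
      have "(\<Sum>i\<in>{p - 1 + s (Suc p)..N}. q ^ i) = q ^ (p - 1 + s (Suc p)) + (\<Sum>i\<in>{p + s (Suc p)..N}. q ^ i)"
        using IH Suc.prems pN by (subst sum.atLeast_Suc_atMost) (auto simp: Suc_diff_Suc)
      moreover have "s p = s (Suc p)" using True sp by (simp add: s_def)
      moreover have "s (Suc p) \<le> N + 2 - p" using IH by linarith
      ultimately show ?thesis using split IH Vp by (simp add: algebra_simps)
    next
      case False
      have Vp: "V p = s (Suc p)" using V[of p] Suc.prems False sp by simp
      have sp2: "s p = Suc (s (Suc p))" using False sp by (simp add: s_def)
      have "s (Suc p) \<le> N + 1 - p" using IH by blast
      then have bnd: "s p \<le> N + 2 - p" using sp2 pN by linarith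
      have pp: "p - 1 + s p = p + s (Suc p)" using sp2 Suc.prems by simp
      have eq: "(\<Sum>p'\<in>{p..Suc N}. q ^ V p') = (\<Sum>i<s p. q ^ i) + (\<Sum>i\<in>{p - 1 + s p..N}. q ^ i)"
        unfolding split pp unfolding sp2 Vp using IH by (simp add: algebra_simps)
      show ?thesis by (rule conjI[OF eq bnd])
    qed
  qed
  have i1: "(\<Sum>p\<in>{1..Suc N}. q ^ V p) = (\<Sum>i<s 1. q ^ i) + (\<Sum>i\<in>{s 1..N}. q ^ i)"
    and i2: "s 1 \<le> N + 1" using inv[of 1] by simp_all
  have U: "{..N} = {..<s 1} \<union> {s 1..N}" using i2 by auto
  have "(\<Sum>i\<le>N. q ^ i) = (\<Sum>i<s 1. q ^ i) + (\<Sum>i\<in>{s 1..N}. q ^ i)"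
    unfolding U by (rule sum.union_disjoint) auto
  then show ?thesis using i1 by simp
qed



lemma perms_iff: "xs \<in> perms n \<longleftrightarrow> length xs = n \<and> distinct xs \<and> (\<forall>x\<in>set xs. 1 \<le> x \<and> x \<le> n)"
proof
  assume "xs \<in> perms n"
  then have l: "length xs = n" and s: "set xs = {1..n}" by (auto simp: perms_def)
  then have "card (set xs) = length xs" by simp
  then have "distinct xs" by (simp add: card_distinct)
  then show "length xs = n \<and> distinct xs \<and> (\<forall>x\<in>set xs. 1 \<le> x \<and> x \<le> n)" using l s by auto
next
  assume a: "length xs = n \<and> distinct xs \<and> (\<forall>x\<in>set xs. 1 \<le> x \<and> x \<le> n)"
  then have "set xs \<subseteq> {1..n}" by auto
  moreover have "card (set xs) = card {1..n}" using a distinct_card by fastforce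
  ultimately have "set xs = {1..n}" by (simp add: card_subset_eq)
  then show "xs \<in> perms n" using a by (simp add: perms_def)
qed

lemma perm_nth: "xs \<in> perms n \<Longrightarrow> i < n \<Longrightarrow> 1 \<le> xs ! i \<and> xs ! i \<le> n"
  by (auto simp: perms_iff)

lemma perm_inj: "xs \<in> perms n \<Longrightarrow> i < n \<Longrightarrow> j < n \<Longrightarrow> xs ! i = xs ! j \<Longrightarrow> i = j"
  by (auto simp: perms_iff nth_eq_iff_index_eq)

definition fx :: "nat \<Rightarrow> nat \<Rightarrow> nat" where "fx p x = (if p \<le> x then Suc x else x)"
definition gx :: "nat \<Rightarrow> nat \<Rightarrow> nat" where "gx p x = (if p < x then x - 1 else x)"

definition ins :: "nat list \<Rightarrow> nat \<Rightarrow> nat list" where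
  "ins t p = map (\<lambda>j. if Suc j < p then fx p (t ! j) else if Suc j = p then p else fx p (t ! (j - 1)))
              [0..<Suc (length t)]"

definition del :: "nat list \<Rightarrow> nat \<Rightarrow> nat list" where
  "del s p = map (\<lambda>j. gx p (if Suc j < p then s ! j else s ! Suc j)) [0..<length s - 1]"

lemma length_ins[simp]: "length (ins t p) = Suc (length t)" by (simp add: ins_def)
lemma nth_ins: "j < Suc (length t) \<Longrightarrow> ins t p ! j =
   (if Suc j < p then fx p (t ! j) else if Suc j = p then p else fx p (t ! (j - 1)))"
  by (simp add: ins_def del: upt_Suc)
lemma length_del[simp]: "length (del s p) = length s - 1" by (simp add: del_def)
lemma nth_del: "j < length s - 1 \<Longrightarrow> del s p ! j = gx p (if Suc j < p then s ! j else s ! Suc j)"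
  by (simp add: del_def)

lemma fx_mono: "fx p x < fx p y \<longleftrightarrow> x < y" by (auto simp: fx_def)
lemma fx_inj: "fx p x = fx p y \<longleftrightarrow> x = y" by (auto simp: fx_def)
lemma fx_le: "fx p x \<le> fx p y \<longleftrightarrow> x \<le> y" by (auto simp: fx_def)
lemma fx_ne: "fx p x \<noteq> p" by (auto simp: fx_def)

lemma ins_perm:
  assumes t: "t \<in> perms N" and p: "1 \<le> p" "p \<le> Suc N"
  shows "ins t p \<in> perms (Suc N)"
proof -
  have lt: "length t = N" using t by (simp add: perms_iff)
  have dist: "distinct (ins t p)"
  proof -
    have "inj_on (\<lambda>j. if Suc j < p then fx p (t ! j) else if Suc j = p then p else fx p (t ! (j - 1))) {0..<Suc N}"
    proof (rule inj_onI)
      fix i j assume i: "i \<in> {0..<Suc N}" and j: "j \<in> {0..<Suc N}"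
        and e: "(if Suc i < p then fx p (t ! i) else if Suc i = p then p else fx p (t ! (i - 1))) =
                (if Suc j < p then fx p (t ! j) else if Suc j = p then p else fx p (t ! (j - 1)))"
      define i' where "i' = (if Suc i < p then i else i - 1)"
      define j' where "j' = (if Suc j < p then j else j - 1)"
      have i': "Suc i \<noteq> p \<Longrightarrow> i' < N" using i p lt by (auto simp: i'_def)
      have j': "Suc j \<noteq> p \<Longrightarrow> j' < N" using j p lt by (auto simp: j'_def)
      show "i = j"
      proof (cases "Suc i = p \<or> Suc j = p")
        case True
        then show ?thesis using e by (auto simp: fx_ne split: if_splits dest: sym)
      next
        case False
        then have "fx p (t ! i') = fx p (t ! j')" using e by (simp add: i'_def j'_def split: if_splits)
        then have "t ! i' = t ! j'" by (simp add: fx_inj)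
        then have "i' = j'" using perm_inj[OF t] i' j' False by blast
        then show ?thesis using False p unfolding i'_def j'_def by (auto split: if_splits)
      qed
    qed
    then show ?thesis unfolding ins_def lt by (simp add: distinct_map del: upt_Suc)
  qed
  have rng: "\<forall>x\<in>set (ins t p). 1 \<le> x \<and> x \<le> Suc N"
  proof
    fix x assume "x \<in> set (ins t p)"
    then obtain j where j: "j < Suc N" and x: "x = ins t p ! j" using lt by (auto simp: in_set_conv_nth)
    show "1 \<le> x \<and> x \<le> Suc N"
      using x j p perm_nth[OF t, of j] perm_nth[OF t, of "j - 1"] by (auto simp: nth_ins lt fx_def)
  qed
  show ?thesis using dist rng lt by (simp add: perms_iff)
qed

lemma ins_fixed: "p \<ge> 1 \<Longrightarrow> p \<le> Suc (length t) \<Longrightarrow> ins t p ! (p - 1) = p"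
  by (simp add: nth_ins)

lemma del_perm:
  assumes s: "s \<in> perms (Suc N)" and p: "1 \<le> p" "p \<le> Suc N" and f: "s ! (p - 1) = p"
  shows "del s p \<in> perms N"
proof -
  have ls: "length s = Suc N" using s by (simp add: perms_iff)
  have ne: "k < Suc N \<Longrightarrow> k \<noteq> p - 1 \<Longrightarrow> s ! k \<noteq> p" for k
  proof
    assume a: "k < Suc N" "k \<noteq> p - 1" "s ! k = p"
    moreover have "p - 1 < Suc N" using p by simp
    ultimately show False using perm_inj[OF s, of k "p - 1"] f by simp
  qed
  have dist: "distinct (del s p)"
  proof -
    have "inj_on (\<lambda>j. gx p (if Suc j < p then s ! j else s ! Suc j)) {0..<N}"
    proof (rule inj_onI)
      fix i j assume i: "i \<in> {0..<N}" and j: "j \<in> {0..<N}"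
        and e: "gx p (if Suc i < p then s ! i else s ! Suc i) = gx p (if Suc j < p then s ! j else s ! Suc j)"
      define i' where "i' = (if Suc i < p then i else Suc i)"
      define j' where "j' = (if Suc j < p then j else Suc j)"
      have i': "i' < Suc N" "i' \<noteq> p - 1" using i p by (auto simp: i'_def)
      have j': "j' < Suc N" "j' \<noteq> p - 1" using j p by (auto simp: j'_def)
      have e2: "gx p (s ! i') = gx p (s ! j')" using e by (simp add: i'_def j'_def split: if_splits)
      have "s ! i' = s ! j'"
        using e2 ne[OF i'] ne[OF j'] by (auto simp: gx_def split: if_splits)
      then have "i' = j'" using perm_inj[OF s] i' j' by blast
      then show "i = j" unfolding i'_def j'_def using p by (auto split: if_splits)
    qed
    then show ?thesis unfolding del_def ls by (simp add: distinct_map)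
  qed
  have rng: "\<forall>x\<in>set (del s p). 1 \<le> x \<and> x \<le> N"
  proof
    fix x assume "x \<in> set (del s p)"
    then obtain j where j: "j < N" and x: "x = del s p ! j" using ls by (auto simp: in_set_conv_nth)
    define j' where "j' = (if Suc j < p then j else Suc j)"
    have j': "j' < Suc N" "j' \<noteq> p - 1" using j p by (auto simp: j'_def)
    have x2: "x = gx p (s ! j')" using x j ls by (simp add: nth_del j'_def)
    show "1 \<le> x \<and> x \<le> N"
      using x2 perm_nth[OF s j'(1)] ne[OF j'] p by (auto simp: gx_def)
  qed
  show ?thesis using dist rng ls by (simp add: perms_iff)
qed

lemma ins_del:
  assumes s: "s \<in> perms (Suc N)" and p: "1 \<le> p" "p \<le> Suc N" and f: "s ! (p - 1) = p"
  shows "ins (del s p) p = s"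
proof -
  have ls: "length s = Suc N" using s by (simp add: perms_iff)
  have ne: "k < Suc N \<Longrightarrow> k \<noteq> p - 1 \<Longrightarrow> s ! k \<noteq> p" for k
  proof
    assume a: "k < Suc N" "k \<noteq> p - 1" "s ! k = p"
    moreover have "p - 1 < Suc N" using p by simp
    ultimately show False using perm_inj[OF s, of k "p - 1"] f by simp
  qed
  have fg: "x \<noteq> p \<Longrightarrow> fx p (gx p x) = x" for x by (auto simp: fx_def gx_def)
  show ?thesis
  proof (rule nth_equalityI)
    show "length (ins (del s p) p) = length s" using ls by simp
    fix j assume "j < length (ins (del s p) p)"
    then have j: "j < Suc N" using ls by simp
    show "ins (del s p) p ! j = s ! j"
    proof (cases "Suc j < p")
      case True
      then show ?thesis using j ls p fg ne[of j] by (simp add: nth_ins nth_del)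
    next
      case False
      show ?thesis
      proof (cases "Suc j = p")
        case True then show ?thesis using j ls f by (simp add: nth_ins True[symmetric])
      next
        case False2: False
        then have "j - 1 < N" "\<not> Suc (j - 1) < p" "Suc (j - 1) = j" using False j p by auto
        then show ?thesis using j ls p fg ne[of j] False False2 by (simp add: nth_ins nth_del)
      qed
    qed
  qed
qed

lemma del_ins:
  assumes t: "t \<in> perms N" and p: "1 \<le> p" "p \<le> Suc N"
  shows "del (ins t p) p = t"
proof -
  have lt: "length t = N" using t by (simp add: perms_iff)
  have gf: "gx p (fx p x) = x" for x by (auto simp: fx_def gx_def)
  show ?thesis
  proof (rule nth_equalityI)
    show "length (del (ins t p) p) = length t" using lt by simp
    fix j assume "j < length (del (ins t p) p)"
    then have j: "j < N" using lt by simp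
    show "del (ins t p) p ! j = t ! j"
      using j lt p gf by (simp add: nth_ins nth_del)
  qed
qed



lemma concat_if_map: "concat (map (\<lambda>i. if P i then [g i] else []) xs) = map g (filter P xs)"
  by (induction xs) auto

lemma dp_alt: "dp x = reduction (map (nth x) (filter (\<lambda>i. x ! i \<noteq> Suc i) [0..<length x]))"
  unfolding dp_def by (simp add: concat_if_map)

lemma reduction_map_fx: "reduction (map (fx p) w) = reduction w"
proof -
  have "card {y \<in> set (map (fx p) w). y \<le> fx p z} = card {y \<in> set w. y \<le> z}" for z
  proof -
    have "{y \<in> set (map (fx p) w). y \<le> fx p z} = fx p ` {y \<in> set w. y \<le> z}"
      by (auto simp: fx_le)
    moreover have "inj_on (fx p) {y \<in> set w. y \<le> z}" by (auto simp: inj_on_def fx_inj)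
    ultimately show ?thesis by (simp add: card_image)
  qed
  then show ?thesis unfolding reduction_def by simp
qed

lemma dp_ins:
  assumes t: "t \<in> perms N" and p: "1 \<le> p" "p \<le> Suc N"
  shows "dp (ins t p) = dp t"
proof -
  have lt: "length t = N" using t by (simp add: perms_iff)
  define m where "m = p - 1"
  have mN: "m \<le> N" and pm: "p = Suc m" using p by (auto simp: m_def)
  define P where "P = (\<lambda>i. ins t p ! i \<noteq> Suc i)"
  define Q where "Q = (\<lambda>i. t ! i \<noteq> Suc i)"
  have u1: "[0..<Suc N] = [0..<m] @ m # map Suc [m..<N]"
  proof -
    have "[0..<Suc N] = [0..<m] @ [m..<Suc N]" using upt_add_eq_append[of 0 m "Suc N - m"] mN by simp
    also have "[m..<Suc N] = m # [Suc m..<Suc N]" using mN by (simp add: upt_conv_Cons)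
    also have "[Suc m..<Suc N] = map Suc [m..<N]" by (simp add: map_Suc_upt)
    finally show ?thesis .
  qed
  have u2: "[0..<N] = [0..<m] @ [m..<N]"
    using upt_add_eq_append[of 0 m "N - m"] mN by simp
  have A: "map (nth (ins t p)) (filter P [0..<m]) = map (fx p) (map (nth t) (filter Q [0..<m]))"
  proof -
    have "filter P [0..<m] = filter Q [0..<m]"
    proof (rule filter_cong)
      fix i assume "i \<in> set [0..<m]"
      then have i: "i < m" by simp
      then have "i < N" using mN by simp
      then have "fx p (t ! i) = Suc i \<longleftrightarrow> t ! i = Suc i"
        using i pm by (auto simp: fx_def)
      then show "P i = Q i" unfolding P_def Q_def using i pm lt mN by (simp add: nth_ins)
    qed simp
    moreover have "map (nth (ins t p)) (filter Q [0..<m]) = map (fx p) (map (nth t) (filter Q [0..<m]))"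
      using pm lt mN by (auto simp: nth_ins)
    ultimately show ?thesis by simp
  qed
  have B: "map (nth (ins t p)) (filter P (map Suc [m..<N])) = map (fx p) (map (nth t) (filter Q [m..<N]))"
  proof -
    have "filter P (map Suc [m..<N]) = map Suc (filter Q [m..<N])"
    proof -
      have "filter P (map Suc [m..<N]) = map Suc (filter (P \<circ> Suc) [m..<N])" by (simp add: filter_map)
      also have "filter (P \<circ> Suc) [m..<N] = filter Q [m..<N]"
      proof (rule filter_cong)
        fix i assume "i \<in> set [m..<N]"
        then have i: "m \<le> i" "i < N" by auto
        then have "fx p (t ! i) = Suc (Suc i) \<longleftrightarrow> t ! i = Suc i"
          using pm by (auto simp: fx_def)
        then show "(P \<circ> Suc) i = Q i" unfolding P_def Q_def using i pm lt by (simp add: nth_ins)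
      qed simp
      finally show ?thesis .
    qed
    moreover have "map (nth (ins t p)) (map Suc (filter Q [m..<N])) = map (fx p) (map (nth t) (filter Q [m..<N]))"
      using pm lt by (auto simp: nth_ins)
    ultimately show ?thesis by simp
  qed
  have C: "\<not> P m" unfolding P_def using pm lt mN by (simp add: nth_ins)
  have main: "map (nth (ins t p)) (filter P [0..<length (ins t p)])
      = map (fx p) (map (nth t) (filter Q [0..<length t]))"
    unfolding length_ins lt u1 u2 using A B C by simp
  have "dp (ins t p) = reduction (map (nth (ins t p)) (filter P [0..<length (ins t p)]))"
    unfolding dp_alt P_def ..
  also have "\<dots> = reduction (map (fx p) (map (nth t) (filter Q [0..<length t])))"
    using main by (rule arg_cong)
  also have "\<dots> = reduction (map (nth t) (filter Q [0..<length t]))" by (rule reduction_map_fx)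
  also have "\<dots> = dp t" unfolding dp_alt Q_def ..
  finally show ?thesis .
qed



definition sh :: "nat \<Rightarrow> nat \<Rightarrow> nat" where "sh m i = (if i < m then i else Suc i)"

lemma nth_ins_sh: "length t = N \<Longrightarrow> p = Suc m \<Longrightarrow> i < N \<Longrightarrow> ins t p ! sh m i = fx p (t ! i)"
  by (auto simp: sh_def nth_ins)

lemma sh_mono: "sh m i < sh m j \<longleftrightarrow> i < j" by (auto simp: sh_def)
lemma sh_ne: "sh m i \<noteq> m" by (auto simp: sh_def)
lemma sh_surj: "k \<noteq> m \<Longrightarrow> k = sh m (if k < m then k else k - 1)" by (auto simp: sh_def)

definition Inv :: "nat list \<Rightarrow> (nat \<times> nat) set" where
  "Inv xs = {(i, j). i < j \<and> j < length xs \<and> xs ! i > xs ! j}"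

lemma inversions_Inv: "inversions xs = card (Inv xs)" by (simp add: inversions_def Inv_def)

lemma finite_Inv: "finite (Inv xs)"
  by (rule finite_subset[of _ "{..<length xs} \<times> {..<length xs}"]) (auto simp: Inv_def)

lemma inv_ins:
  assumes t: "t \<in> perms N" and p: "1 \<le> p" "p \<le> Suc N"
  shows "\<exists>c. inversions (ins t p) = inversions t + 2 * c"
proof -
  have lt: "length t = N" using t by (simp add: perms_iff)
  define m where "m = p - 1"
  have mN: "m \<le> N" and pm: "p = Suc m" using p by (auto simp: m_def)
  define A1 where "A1 = {i. i < m \<and> p \<le> t ! i}"
  define A2 where "A2 = {j. m \<le> j \<and> j < N \<and> t ! j < p}"
  define h where "h = (\<lambda>(i, j). (sh m i, sh m j))"
  have nsh: "i < N \<Longrightarrow> ins t p ! sh m i = fx p (t ! i)" for i using nth_ins_sh[OF lt pm] .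
  have shlt: "i < N \<Longrightarrow> sh m i < Suc N" for i by (auto simp: sh_def)
  have eq: "Inv (ins t p) = h ` Inv t \<union> (\<lambda>i. (i, m)) ` A1 \<union> (\<lambda>j. (m, Suc j)) ` A2"
  proof (rule set_eqI)
    fix x :: "nat \<times> nat"
    obtain i j where x: "x = (i, j)" by (cases x)
    show "x \<in> Inv (ins t p) \<longleftrightarrow> x \<in> h ` Inv t \<union> (\<lambda>i. (i, m)) ` A1 \<union> (\<lambda>j. (m, Suc j)) ` A2"
    proof
      assume "x \<in> Inv (ins t p)"
      then have ij: "i < j" "j < Suc N" "ins t p ! i > ins t p ! j" using lt by (auto simp: Inv_def x)
      show "x \<in> h ` Inv t \<union> (\<lambda>i. (i, m)) ` A1 \<union> (\<lambda>j. (m, Suc j)) ` A2"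
      proof (cases "i = m")
        case True
        then obtain j' where j': "j = Suc j'" "m \<le> j'" "j' < N" using ij by (cases j) auto
        then have "ins t p ! j = fx p (t ! j')" using lt pm by (simp add: nth_ins)
        then have "t ! j' < p" using ij True pm lt mN by (auto simp: nth_ins fx_def split: if_splits)
        then have "j' \<in> A2" using j' by (simp add: A2_def)
        then show ?thesis using True j' x by auto
      next
        case False
        show ?thesis
        proof (cases "j = m")
          case True
          then have "i < m" using ij by simp
          then have "ins t p ! i = fx p (t ! i)" using pm lt mN by (simp add: nth_ins)
          then have "p \<le> t ! i" using ij True pm lt mN \<open>i < m\<close> by (auto simp: nth_ins fx_def split: if_splits)
          then have "i \<in> A1" using \<open>i < m\<close> by (simp add: A1_def)
          then show ?thesis using True x by auto
        next
          case False2: False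
          define i' where "i' = (if i < m then i else i - 1)"
          define j' where "j' = (if j < m then j else j - 1)"
          have ii: "i = sh m i'" unfolding i'_def using sh_surj False by blast
          have jj: "j = sh m j'" unfolding j'_def using sh_surj False2 by blast
          have i'N: "i' < N" and j'N: "j' < N" using ij False False2 mN by (auto simp: i'_def j'_def)
          have "i' < j'" using ij(1) ii jj sh_mono by metis
          moreover have "t ! i' > t ! j'" using ij(3) ii jj nsh[OF i'N] nsh[OF j'N] by (metis fx_mono)
          ultimately have "(i', j') \<in> Inv t" using j'N lt by (simp add: Inv_def)
          then show ?thesis using ii jj x by (auto simp: h_def)
        qed
      qed
    next
      assume "x \<in> h ` Inv t \<union> (\<lambda>i. (i, m)) ` A1 \<union> (\<lambda>j. (m, Suc j)) ` A2"
      then consider (a) "x \<in> h ` Inv t" | (b) "x \<in> (\<lambda>i. (i, m)) ` A1" | (c) "x \<in> (\<lambda>j. (m, Suc j)) ` A2" by blast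
      then show "x \<in> Inv (ins t p)"
      proof cases
        case a
        then obtain i' j' where ij: "(i', j') \<in> Inv t" "x = (sh m i', sh m j')" by (auto simp: h_def)
        then have "i' < j'" "j' < N" "t ! i' > t ! j'" using lt by (auto simp: Inv_def)
        then show ?thesis using ij nsh[of i'] nsh[of j'] shlt[of j'] sh_mono fx_mono lt
          by (auto simp: Inv_def)
      next
        case b
        then obtain i where i: "i < m" "p \<le> t ! i" "x = (i, m)" by (auto simp: A1_def)
        then show ?thesis using pm lt mN by (auto simp: Inv_def nth_ins fx_def)
      next
        case c
        then obtain j where j: "m \<le> j" "j < N" "t ! j < p" "x = (m, Suc j)" by (auto simp: A2_def)
        then show ?thesis using pm lt mN by (auto simp: Inv_def nth_ins fx_def)
      qed
    qed
  qed
  have inj_h: "inj_on h (Inv t)" by (auto simp: inj_on_def h_def sh_def split: if_splits)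
  have fA1: "finite A1" by (auto simp: A1_def)
  have fA2: "finite A2" by (auto simp: A2_def)
  have d1: "h ` Inv t \<inter> (\<lambda>i. (i, m)) ` A1 = {}" using sh_ne by (auto simp: h_def)
  have d2: "(h ` Inv t \<union> (\<lambda>i. (i, m)) ` A1) \<inter> (\<lambda>j. (m, Suc j)) ` A2 = {}"
    using sh_ne by (auto simp: h_def A1_def dest: sym)
  have "card (Inv (ins t p)) = card (Inv t) + card A1 + card A2"
    unfolding eq
    apply (subst card_Un_disjoint)
    using finite_Inv fA1 fA2 d2 apply auto[3]
    apply (subst card_Un_disjoint)
    using finite_Inv fA1 d1 apply auto[3]
    using inj_h by (simp add: card_image inj_on_def)
  moreover have "card A1 = card A2"
  proof -
    define B where "B = {j. j < N \<and> t ! j < p}"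
    define X where "X = {j. j < m \<and> t ! j < p}"
    have "nth t ` B = {1..<p}"
    proof
      show "nth t ` B \<subseteq> {1..<p}" using perm_nth[OF t] by (auto simp: B_def)
      show "{1..<p} \<subseteq> nth t ` B"
      proof
        fix v assume v: "v \<in> {1..<p}"
        then have "v \<in> set t" using t p by (auto simp: perms_def)
        then obtain j where "j < N" "t ! j = v" using lt by (auto simp: in_set_conv_nth)
        then show "v \<in> nth t ` B" using v by (auto simp: B_def)
      qed
    qed
    moreover have "inj_on (nth t) B" using perm_inj[OF t] by (auto simp: inj_on_def B_def)
    ultimately have cB: "card B = m" using pm by (metis card_image card_atLeastLessThan diff_Suc_1)
    have "B = X \<union> A2" using mN by (auto simp: B_def X_def A2_def)
    moreover have "X \<inter> A2 = {}" by (auto simp: X_def A2_def)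
    ultimately have c1: "card B = card X + card A2" by (simp add: card_Un_disjoint X_def A2_def)
    have "{..<m} = X \<union> A1" by (auto simp: X_def A1_def)
    moreover have "X \<inter> A1 = {}" by (auto simp: X_def A1_def)
    ultimately have c2: "m = card X + card A1" by (metis card_lessThan card_Un_disjoint finite_lessThan finite_Un)
    show ?thesis using cB c1 c2 by simp
  qed
  ultimately have "inversions (ins t p) = inversions t + 2 * card A2" by (simp add: inversions_Inv)
  then show ?thesis by blast
qed

lemma sign_ins:
  assumes "t \<in> perms N" "1 \<le> p" "p \<le> Suc N"
  shows "(-1::int poly) ^ inversions (ins t p) = (-1) ^ inversions t"
  using inv_ins[OF assms] by (auto simp: power_add power_mult)



definition dw :: "nat list \<Rightarrow> nat \<Rightarrow> nat" where
  "dw xs i = (if i < length xs \<and> xs ! (i - 1) > xs ! i then i else 0)"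

lemma maj_alt: "maj xs = (\<Sum>i\<in>{1..length xs}. dw xs i)"
proof -
  have "maj xs = (\<Sum>i<length xs. if Suc i < length xs \<and> xs ! i > xs ! Suc i then Suc i else 0)"
    unfolding maj_def by (rule sum.mono_neutral_cong_left) auto
  also have "\<dots> = (\<Sum>i<length xs. dw xs (Suc i))" by (simp add: dw_def)
  also have "\<dots> = (\<Sum>i\<in>{1..length xs}. dw xs i)" by (simp add: sum.atLeast1_atMost_eq)
  finally show ?thesis .
qed

definition desge :: "nat list \<Rightarrow> nat \<Rightarrow> nat" where
  "desge t p = card {i. p \<le> i \<and> i < length t \<and> t ! (i - 1) > t ! i}"

definition Lf :: "nat list \<Rightarrow> nat \<Rightarrow> bool" where
  "Lf t p = (2 \<le> p \<and> p \<le> length t \<and>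
     ((p \<le> t ! (p - 2) \<and> t ! (p - 1) < p) \<or>
      (t ! (p - 2) < t ! (p - 1) \<and> (p \<le> t ! (p - 2) \<longleftrightarrow> p \<le> t ! (p - 1)))))"

lemma maj_ins:
  assumes t: "t \<in> perms N" and p: "1 \<le> p" "p \<le> Suc N"
  shows "maj (ins t p) = maj t + desge t p + (if p \<le> N \<and> t ! (p - 1) < p then 1 else 0)
                        + (if Lf t p then p - 1 else 0)"
proof -
  have lt: "length t = N" using t by (simp add: perms_iff)
  define u where "u = ins t p"
  have lu: "length u = Suc N" using lt by (simp add: u_def)
  have uval: "1 \<le> i \<Longrightarrow> i \<le> Suc N \<Longrightarrow> u ! (i - 1) =
      (if i < p then fx p (t ! (i - 1)) else if i = p then p else fx p (t ! (i - 2)))" for i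
    using lt by (auto simp: u_def nth_ins numeral_2_eq_2)
  have low: "(\<Sum>i\<in>{1..<p}. dw u i) + (if 2 \<le> p then dw t (p - 1) else 0)
           = (\<Sum>i\<in>{1..<p}. dw t i) + (if 2 \<le> p then dw u (p - 1) else 0)"
  proof (cases "2 \<le> p")
    case False then have "p = 1" using p by simp
    then show ?thesis by simp
  next
    case True
    have e: "{1..<p} = insert (p - 1) {1..<p - 1}" using True by auto
    have "(\<Sum>i\<in>{1..<p - 1}. dw u i) = (\<Sum>i\<in>{1..<p - 1}. dw t i)"
    proof (rule sum.cong)
      fix i assume i: "i \<in> {1..<p - 1}"
      then have "u ! (i - 1) = fx p (t ! (i - 1))" "u ! i = fx p (t ! i)"
        using uval[of i] uval[of "Suc i"] p by auto
      moreover have "i < N" using i p by auto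
      ultimately show "dw u i = dw t i" using i p lu lt by (simp add: dw_def fx_mono)
    qed simp
    then show ?thesis unfolding e using True by simp
  qed
  have high: "(\<Sum>i\<in>{Suc p..Suc N}. dw u i) = (\<Sum>i\<in>{p..N}. dw t i) + desge t p"
  proof -
    have "(\<Sum>i\<in>{Suc p..Suc N}. dw u i) = (\<Sum>j\<in>{p..N}. dw u (Suc j))"
      by (rule sum.shift_bounds_cl_Suc_ivl)
    also have "\<dots> = (\<Sum>j\<in>{p..N}. dw t j + (if j < N \<and> t ! (j - 1) > t ! j then 1 else 0))"
    proof (rule sum.cong)
      fix j assume j: "j \<in> {p..N}"
      have a: "u ! j = fx p (t ! (j - 1))" using uval[of "Suc j"] j p by auto
      show "dw u (Suc j) = dw t j + (if j < N \<and> t ! (j - 1) > t ! j then 1 else 0)"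
      proof (cases "j < N")
        case True
        have b: "u ! Suc j = fx p (t ! j)" using uval[of "Suc (Suc j)"] j p True by auto
        show ?thesis using a b True lu lt j p by (auto simp: dw_def fx_mono)
      next
        case False then show ?thesis using lu lt by (simp add: dw_def)
      qed
    qed simp
    also have "\<dots> = (\<Sum>j\<in>{p..N}. dw t j) + desge t p"
    proof -
      have "desge t p = card {j \<in> {p..N}. j < N \<and> t ! (j - 1) > t ! j}"
        unfolding desge_def lt by (rule arg_cong[where f = card]) auto
      also have "\<dots> = (\<Sum>j\<in>{p..N}. if j < N \<and> t ! (j - 1) > t ! j then 1 else 0)"
        by (simp add: sum.If_cases Int_def)
      finally show ?thesis by (simp add: sum.distrib)
    qed
    finally show ?thesis .
  qed
  have mu: "maj u = (\<Sum>i\<in>{1..<p}. dw u i) + dw u p + (\<Sum>i\<in>{Suc p..Suc N}. dw u i)"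
  proof -
    have e: "{1..Suc N} = {1..<p} \<union> {p..Suc N}" using p by auto
    have "maj u = (\<Sum>i\<in>{1..<p}. dw u i) + (\<Sum>i\<in>{p..Suc N}. dw u i)"
      unfolding maj_alt lu e by (rule sum.union_disjoint) auto
    moreover have "(\<Sum>i\<in>{p..Suc N}. dw u i) = dw u p + (\<Sum>i\<in>{Suc p..Suc N}. dw u i)"
      using p by (rule_tac sum.atLeast_Suc_atMost) simp
    ultimately show ?thesis by simp
  qed
  have mt: "maj t = (\<Sum>i\<in>{1..<p}. dw t i) + (\<Sum>i\<in>{p..N}. dw t i)"
  proof -
    have e: "{1..N} = {1..<p} \<union> {p..N}" using p by auto
    show ?thesis unfolding maj_alt lt e by (rule sum.union_disjoint) auto
  qed
  have loc: "dw u p + (if 2 \<le> p then dw u (p - 1) else 0)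
           = (if 2 \<le> p then dw t (p - 1) else 0) + (if p \<le> N \<and> t ! (p - 1) < p then 1 else 0)
             + (if Lf t p then p - 1 else 0)"
  proof -
    have up: "u ! (p - 1) = p" using uval[of p] p by simp
    have dup: "dw u p = (if p \<le> N \<and> t ! (p - 1) < p then p else 0)"
    proof (cases "p \<le> N")
      case True
      have "u ! p = fx p (t ! (p - 1))" using uval[of "Suc p"] True p by auto
      then show ?thesis using up True lu by (auto simp: dw_def fx_def)
    next
      case False then show ?thesis using lu p by (simp add: dw_def)
    qed
    show ?thesis
    proof (cases "2 \<le> p")
      case False
      then have p1: "p = 1" using p by simp
      have "p \<le> N \<Longrightarrow> t ! 0 \<ge> 1" using perm_nth[OF t, of 0] p1 by simp
      then have "dw u p = 0" using dup p1 by auto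
      moreover have "\<not> Lf t p" using p1 by (simp add: Lf_def)
      ultimately show ?thesis using p1 \<open>p \<le> N \<Longrightarrow> t ! 0 \<ge> 1\<close> by auto
    next
      case True
      obtain k where pk: "p = Suc (Suc k)" using True by (metis add_2_eq_Suc le_Suc_ex)
      have p2: "p - 2 = k" "p - 1 = Suc k" using pk by auto
      have a1: "u ! k = fx p (t ! k)" using uval[of "Suc k"] pk p by simp
      have up': "u ! Suc k = p" using up pk by simp
      have dup1: "dw u (p - 1) = (if p \<le> t ! (p - 2) then p - 1 else 0)"
        unfolding p2 using a1 up' pk lu p by (auto simp: dw_def fx_def)
      have dtp1: "dw t (p - 1) = (if p \<le> N \<and> t ! (p - 2) > t ! (p - 1) then p - 1 else 0)"
        unfolding p2 using pk lt p by (auto simp: dw_def)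
      show ?thesis
      proof (cases "p \<le> N")
        case False
        then have pN: "p = Suc N" using p by simp
        have "t ! (p - 2) \<le> N" using perm_nth[OF t, of "p - 2"] True pN by simp
        then have "dw u (p - 1) = 0" using dup1 pN by simp
        moreover have "dw u p = 0" "dw t (p - 1) = 0" "\<not> Lf t p" using dup dtp1 pN by (auto simp: Lf_def lt)
        ultimately show ?thesis using pN by simp
      next
        case True2: True
        define a where "a = t ! (p - 2)"
        define b where "b = t ! (p - 1)"
        have ne: "a \<noteq> b" unfolding a_def b_def p2 using perm_inj[OF t, of k "Suc k"] pk True2 by auto
        have Lfe: "Lf t p = ((p \<le> a \<and> b < p) \<or> (a < b \<and> (p \<le> a \<longleftrightarrow> p \<le> b)))"
          using True True2 lt by (simp add: Lf_def a_def b_def)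
        have d1: "dw u p = (if b < p then p else 0)" using dup True2 by (simp add: b_def)
        have d2: "dw u (p - 1) = (if p \<le> a then p - 1 else 0)" using dup1 by (simp add: a_def)
        have d3: "dw t (p - 1) = (if a > b then p - 1 else 0)" using dtp1 True2 by (simp add: a_def b_def)
        have "dw u p + dw u (p - 1) = dw t (p - 1) + (if b < p then 1 else 0) + (if Lf t p then p - 1 else 0)"
          unfolding d1 d2 d3 Lfe using ne True by (cases "p \<le> a"; cases "b < p"; cases "a < b") auto
        then show ?thesis using True True2 by (simp add: b_def)
      qed
    qed
  qed
  show ?thesis using mu mt low high loc unfolding u_def[symmetric]
    by linarith
qed



definition fixge :: "nat list \<Rightarrow> nat \<Rightarrow> nat" where
  "fixge t p = card {i. p \<le> i \<and> i \<le> length t \<and> t ! (i - 1) = i}"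

definition rho :: "nat list \<Rightarrow> nat \<Rightarrow> nat" where
  "rho t p = desge t p + fixge t p + (if p \<le> length t \<and> t ! (p - 1) < p then 1 else 0)"

lemma card_ge_step:
  assumes "finite {i. Suc p \<le> i \<and> Q i}"
  shows "card {i. p \<le> i \<and> Q i} = card {i. Suc p \<le> i \<and> Q i} + (if Q p then 1 else 0)"
proof -
  have e: "{i. p \<le> i \<and> Q i} = (if Q p then insert p {i. Suc p \<le> i \<and> Q i} else {i. Suc p \<le> i \<and> Q i})"
    by (auto simp: le_eq_less_or_eq)
  show ?thesis unfolding e using assms by (simp add: card_insert_disjoint)
qed

lemma desge_step: "desge t p = desge t (Suc p) + (if p < length t \<and> t ! (p - 1) > t ! p then 1 else 0)"
  unfolding desge_def by (subst card_ge_step[where Q = "\<lambda>i. i < length t \<and> t ! (i - 1) > t ! i"]) auto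

lemma fixge_step: "fixge t p = fixge t (Suc p) + (if p \<le> length t \<and> t ! (p - 1) = p then 1 else 0)"
  unfolding fixge_def by (subst card_ge_step[where Q = "\<lambda>i. i \<le> length t \<and> t ! (i - 1) = i"]) auto

lemma rho_end: "rho t (Suc (length t)) = 0"
  unfolding rho_def desge_def fixge_def by simp

lemma Lf_end: "\<not> Lf t (Suc (length t))" by (simp add: Lf_def)

lemma rho_step:
  assumes t: "t \<in> perms N" and p: "1 \<le> p" "p \<le> N"
  shows "rho t p = rho t (Suc p) + (if Lf t (Suc p) then 0 else 1)"
proof -
  have lt: "length t = N" using t by (simp add: perms_iff)
  obtain k where pk: "p = Suc k" using p by (cases p) auto
  have a1: "1 \<le> t ! k" "t ! k \<le> N" using perm_nth[OF t, of k] pk p by auto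
  show ?thesis
  proof (cases "p = N")
    case True
    have "rho t (Suc p) = 0" using rho_end[of t] lt True by simp
    moreover have "\<not> Lf t (Suc p)" using Lf_end[of t] lt True by simp
    moreover have "desge t p = 0" unfolding desge_def using True lt by simp
    moreover have "fixge t p = (if t ! k = p then 1 else 0)"
    proof -
      have "{i. p \<le> i \<and> i \<le> length t \<and> t ! (i - 1) = i} = (if t ! k = p then {p} else {})"
        using True lt pk by auto
      then show ?thesis unfolding fixge_def by simp
    qed
    ultimately show ?thesis unfolding rho_def using True lt pk a1 by auto
  next
    case False
    then have pN: "p < N" using p by simp
    define a where "a = t ! k"
    define b where "b = t ! p"
    have ne: "a \<noteq> b" unfolding a_def b_def using perm_inj[OF t, of k p] pk pN by auto
    have Lfe: "Lf t (Suc p) = ((Suc p \<le> a \<and> b < Suc p) \<or> (a < b \<and> (Suc p \<le> a \<longleftrightarrow> Suc p \<le> b)))"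
      using pN lt pk by (simp add: Lf_def a_def b_def)
    have r1: "rho t p = desge t (Suc p) + (if a > b then 1 else 0) + fixge t (Suc p)
                      + (if a = p then 1 else 0) + (if a < p then 1 else 0)"
      unfolding rho_def using desge_step[of t p] fixge_step[of t p] pN lt pk
      by (simp add: a_def b_def)
    have r2: "rho t (Suc p) = desge t (Suc p) + fixge t (Suc p) + (if b < Suc p then 1 else 0)"
      unfolding rho_def using pN lt pk by (simp add: b_def)
    have "(if a > b then 1 else 0) + (if a = p then 1 else 0) + (if a < p then 1 else 0)
          = (if b < Suc p then 1 else 0) + (if Lf t (Suc p) then 0 else (1::nat))"
      unfolding Lfe using ne by (cases "a < b"; cases "a \<le> p"; cases "b \<le> p"; cases "a = p") auto
    then show ?thesis unfolding r1 r2 by simp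
  qed
qed

lemma key_sum:
  assumes t: "t \<in> perms N"
  shows "(\<Sum>p\<in>{1..Suc N}. qvar ^ (maj (ins t p) + fixge t p)) = qvar ^ maj t * qint (Suc N)"
proof -
  have lt: "length t = N" using t by (simp add: perms_iff)
  define V where "V p = rho t p + (if Lf t p then p - 1 else 0)" for p
  have eV: "maj (ins t p) + fixge t p = maj t + V p" if "1 \<le> p" "p \<le> Suc N" for p
    using maj_ins[OF t that] unfolding V_def rho_def lt by simp
  have s: "(\<Sum>p\<in>{1..Suc N}. qvar ^ V p) = (\<Sum>i\<le>N. qvar ^ i)"
    by (rule slot_sum[where \<rho> = "rho t" and Lf = "Lf t"])
       (use rho_end[of t] Lf_end[of t] lt rho_step[OF t] in \<open>auto simp: V_def\<close>)
  have "(\<Sum>p\<in>{1..Suc N}. qvar ^ (maj (ins t p) + fixge t p)) = (\<Sum>p\<in>{1..Suc N}. qvar ^ maj t * qvar ^ V p)"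
    by (rule sum.cong) (auto simp: eV power_add)
  also have "\<dots> = qvar ^ maj t * (\<Sum>i\<le>N. qvar ^ i)" unfolding sum_distrib_left[symmetric] s ..
  also have "(\<Sum>i\<le>N. qvar ^ i) = qint (Suc N)" by (simp add: qint_def lessThan_Suc_atMost)
  finally show ?thesis .
qed



definition Fx :: "nat list \<Rightarrow> nat set" where
  "Fx s = {i \<in> {1..length s}. s ! (i - 1) = i}"

lemma finite_Fx: "finite (Fx s)" by (simp add: Fx_def)

lemma finite_perms: "finite (perms n)"
proof -
  have "perms n \<subseteq> {xs. set xs \<subseteq> {1..n} \<and> length xs = n}" by (auto simp: perms_def)
  then show ?thesis by (rule finite_subset) (simp add: finite_lists_length_eq)
qed

lemma qsum_card: "finite (F::nat set) \<Longrightarrow> (\<Sum>f\<in>F. qvar ^ card {g\<in>F. f < g}) = qint (card F)"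
proof (induction "card F" arbitrary: F)
  case 0 then show ?case by (simp add: qint_def)
next
  case (Suc c)
  then have ne: "F \<noteq> {}" by auto
  define m where "m = Min F"
  have mF: "m \<in> F" using ne Suc.prems by (simp add: m_def)
  have mmin: "f \<in> F \<Longrightarrow> m \<le> f" for f using Suc.prems by (simp add: m_def)
  define F' where "F' = F - {m}"
  have cF': "card F' = c" using Suc.hyps(2) mF Suc.prems by (simp add: F'_def)
  have fF': "finite F'" using Suc.prems by (simp add: F'_def)
  have e1: "{g\<in>F. m < g} = F'" using mmin mF by (auto simp: F'_def le_neq_implies_less)
  have e2: "f \<in> F' \<Longrightarrow> {g\<in>F. f < g} = {g\<in>F'. f < g}" for f
    by (auto simp: F'_def dest: mmin)
  have "(\<Sum>f\<in>F. qvar ^ card {g\<in>F. f < g}) = qvar ^ card {g\<in>F. m < g} + (\<Sum>f\<in>F'. qvar ^ card {g\<in>F. f < g})"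
    using mF Suc.prems unfolding F'_def by (simp add: sum.remove)
  also have "(\<Sum>f\<in>F'. qvar ^ card {g\<in>F. f < g}) = (\<Sum>f\<in>F'. qvar ^ card {g\<in>F'. f < g})"
    by (rule sum.cong) (simp_all add: e2)
  also have "\<dots> = qint c" using Suc.hyps(1)[of F'] cF' fF' by simp
  finally show ?case using e1 cF' Suc.hyps(2)[symmetric] by (simp add: qint_def)
qed

lemma dp_length: "length (dp s) = card {i. i < length s \<and> s ! i \<noteq> Suc i}"
proof -
  have "length (dp s) = length (filter (\<lambda>i. s ! i \<noteq> Suc i) [0..<length s])"
    by (simp add: dp_alt reduction_def)
  also have "\<dots> = card (set (filter (\<lambda>i. s ! i \<noteq> Suc i) [0..<length s]))"
    by (rule distinct_card[symmetric]) simp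
  also have "set (filter (\<lambda>i. s ! i \<noteq> Suc i) [0..<length s]) = {i. i < length s \<and> s ! i \<noteq> Suc i}" by auto
  finally show ?thesis .
qed

lemma card_Fx: "length s = n \<Longrightarrow> card (Fx s) = n - length (dp s)"
proof -
  assume l: "length s = n"
  have "Fx s = Suc ` {i. i < n \<and> s ! i = Suc i}"
  proof (rule set_eqI)
    fix x
    show "x \<in> Fx s \<longleftrightarrow> x \<in> Suc ` {i. i < n \<and> s ! i = Suc i}"
    proof (cases x)
      case 0 then show ?thesis by (auto simp: Fx_def)
    next
      case (Suc y) then show ?thesis using l by (auto simp: Fx_def)
    qed
  qed
  then have c1: "card (Fx s) = card {i. i < n \<and> s ! i = Suc i}" by (simp add: card_image)
  have U: "{..<n} = {i. i < n \<and> s ! i = Suc i} \<union> {i. i < n \<and> s ! i \<noteq> Suc i}" by auto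
  have "card {..<n} = card {i. i < n \<and> s ! i = Suc i} + card {i. i < n \<and> s ! i \<noteq> Suc i}"
    unfolding U by (rule card_Un_disjoint) auto
  then show ?thesis using c1 dp_length[of s] l by simp
qed

lemma reduction_perm: "s \<in> perms n \<Longrightarrow> reduction s = s"
proof -
  assume s: "s \<in> perms n"
  then have st: "set s = {1..n}" by (simp add: perms_def)
  have "card {y \<in> set s. y \<le> x} = x" if "x \<in> set s" for x
  proof -
    have "{y \<in> set s. y \<le> x} = {1..x}" using that st by auto
    then show ?thesis by simp
  qed
  then show ?thesis unfolding reduction_def by (simp add: map_idI)
qed

lemma dp_nofix: "s \<in> perms n \<Longrightarrow> (\<forall>i<n. s ! i \<noteq> Suc i) \<Longrightarrow> dp s = s"
proof -
  assume s: "s \<in> perms n" and nf: "\<forall>i<n. s ! i \<noteq> Suc i"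
  have l: "length s = n" using s by (simp add: perms_iff)
  have "filter (\<lambda>i. s ! i \<noteq> Suc i) [0..<length s] = [0..<length s]" using nf l by simp
  then have "dp s = reduction (map (nth s) [0..<length s])" by (simp add: dp_alt)
  also have "map (nth s) [0..<length s] = s" by (rule map_nth)
  finally show ?thesis using reduction_perm[OF s] by simp
qed

lemma Fx_ins_gt:
  assumes t: "t \<in> perms N" and p: "1 \<le> p" "p \<le> Suc N"
  shows "card {g \<in> Fx (ins t p). p < g} = fixge t p"
proof -
  have lt: "length t = N" using t by (simp add: perms_iff)
  have "{g \<in> Fx (ins t p). p < g} = Suc ` {i. p \<le> i \<and> i \<le> length t \<and> t ! (i - 1) = i}"
  proof (rule set_eqI)
    fix g
    show "g \<in> {g \<in> Fx (ins t p). p < g} \<longleftrightarrow> g \<in> Suc ` {i. p \<le> i \<and> i \<le> length t \<and> t ! (i - 1) = i}"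
    proof (cases "p < g \<and> g \<le> Suc N")
      case True
      then obtain i where gi: "g = Suc i" "p \<le> i" "i \<le> N" by (cases g) auto
      have "ins t p ! i = fx p (t ! (i - 1))" using gi lt by (simp add: nth_ins)
      moreover have "fx p (t ! (i - 1)) = Suc i \<longleftrightarrow> t ! (i - 1) = i" using gi by (auto simp: fx_def)
      ultimately show ?thesis using gi lt by (auto simp: Fx_def)
    next
      case False
      then show ?thesis using lt by (auto simp: Fx_def)
    qed
  qed
  then show ?thesis unfolding fixge_def by (simp add: card_image)
qed

lemma Fx_ins_p: "1 \<le> p \<Longrightarrow> p \<le> Suc (length t) \<Longrightarrow> p \<in> Fx (ins t p)"
  using ins_fixed[of p t] by (simp add: Fx_def)

context
  fixes \<sigma> :: "nat list" and k :: nat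
  assumes \<sigma>: "\<sigma> \<in> derangements k"
begin

definition PP :: "nat \<Rightarrow> nat list set" where "PP n = {\<pi> \<in> perms n. dp \<pi> = \<sigma>}"
definition wt :: "nat list \<Rightarrow> int poly" where "wt \<pi> = (-1) ^ inversions \<pi> * qvar ^ maj \<pi>"
definition AA :: "nat \<Rightarrow> int poly" where "AA n = (\<Sum>\<pi>\<in>PP n. wt \<pi>)"

lemma finite_PP: "finite (PP n)" unfolding PP_def using finite_perms by simp

lemma len_sigma: "length \<sigma> = k" using \<sigma> by (simp add: derangements_def perms_iff)

lemma card_Fx_PP: "\<pi> \<in> PP n \<Longrightarrow> card (Fx \<pi>) = n - k"
  using card_Fx[of \<pi> n] len_sigma by (simp add: PP_def perms_iff)

lemma AA_base: "AA k = wt \<sigma>"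
proof -
  have sp: "\<sigma> \<in> perms k" and nf: "\<forall>i<k. \<sigma> ! i \<noteq> Suc i" using \<sigma> by (auto simp: derangements_def)
  have "PP k = {\<sigma>}"
  proof
    show "{\<sigma>} \<subseteq> PP k" using sp nf dp_nofix[OF sp] by (simp add: PP_def)
    show "PP k \<subseteq> {\<sigma>}"
    proof
      fix \<pi> assume \<pi>: "\<pi> \<in> PP k"
      then have pp: "\<pi> \<in> perms k" and l: "length \<pi> = k" by (auto simp: PP_def perms_iff)
      have "Fx \<pi> = {}" using card_Fx_PP[OF \<pi>] finite_Fx[of \<pi>] by simp
      have "\<forall>i<k. \<pi> ! i \<noteq> Suc i"
      proof (intro allI impI)
        fix i assume "i < k"
        then have "Suc i \<notin> Fx \<pi>" using \<open>Fx \<pi> = {}\<close> by simp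
        then show "\<pi> ! i \<noteq> Suc i" using l \<open>i < k\<close> by (simp add: Fx_def)
      qed
      then have "dp \<pi> = \<pi>" using dp_nofix[OF pp] by simp
      then show "\<pi> \<in> {\<sigma>}" using \<pi> by (simp add: PP_def)
    qed
  qed
  then show ?thesis by (simp add: AA_def)
qed

lemma AA_step:
  assumes kN: "k \<le> N"
  shows "qint (Suc N - k) * AA (Suc N) = qint (Suc N) * AA N"
proof -
  define c where "c = (\<lambda>\<pi> f. qvar ^ card {g \<in> Fx \<pi>. f < g} * wt \<pi>)"
  have "qint (Suc N - k) * AA (Suc N) = (\<Sum>\<pi>\<in>PP (Suc N). qint (card (Fx \<pi>)) * wt \<pi>)"
    unfolding AA_def sum_distrib_left by (rule sum.cong) (simp_all add: card_Fx_PP)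
  also have "\<dots> = (\<Sum>\<pi>\<in>PP (Suc N). \<Sum>f\<in>Fx \<pi>. c \<pi> f)"
    unfolding c_def by (rule sum.cong) (simp_all add: qsum_card[OF finite_Fx, symmetric] sum_distrib_right)
  also have "\<dots> = (\<Sum>(\<pi>, f)\<in>Sigma (PP (Suc N)) Fx. c \<pi> f)"
    by (rule sum.Sigma) (simp_all add: finite_PP finite_Fx)
  also have "\<dots> = (\<Sum>(\<tau>, p)\<in>PP N \<times> {1..Suc N}. c (ins \<tau> p) p)"
  proof -
    define h where "h = (\<lambda>(\<tau>, p). (ins \<tau> p, p))"
    have bij: "bij_betw h (PP N \<times> {1..Suc N}) (Sigma (PP (Suc N)) Fx)"
    proof (rule bij_betwI')
      fix x y assume x: "x \<in> PP N \<times> {1..Suc N}" and y: "y \<in> PP N \<times> {1..Suc N}"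
      obtain t1 p1 where x1: "x = (t1, p1)" by (cases x)
      obtain t2 p2 where y1: "y = (t2, p2)" by (cases y)
      show "(h x = h y) = (x = y)"
      proof
        assume "h x = h y"
        then have "ins t1 p1 = ins t2 p2" "p1 = p2" by (auto simp: h_def x1 y1)
        then have "del (ins t1 p1) p1 = del (ins t2 p2) p2" by simp
        then have "t1 = t2" using del_ins[of t1 N p1] del_ins[of t2 N p2] x y by (auto simp: x1 y1 PP_def)
        then show "x = y" using \<open>p1 = p2\<close> x1 y1 by simp
      qed simp
    next
      fix x assume x: "x \<in> PP N \<times> {1..Suc N}"
      obtain t p where x1: "x = (t, p)" by (cases x)
      have t: "t \<in> perms N" "dp t = \<sigma>" and p: "1 \<le> p" "p \<le> Suc N" using x by (auto simp: x1 PP_def)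
      have lt: "length t = N" using t by (simp add: perms_iff)
      show "h x \<in> Sigma (PP (Suc N)) Fx"
        using ins_perm[OF t(1) p] dp_ins[OF t(1) p] t(2) Fx_ins_p[of p t] p lt
        by (simp add: h_def x1 PP_def)
    next
      fix y assume y: "y \<in> Sigma (PP (Suc N)) Fx"
      obtain s f where y1: "y = (s, f)" by (cases y)
      have s: "s \<in> perms (Suc N)" "dp s = \<sigma>" and f: "f \<in> Fx s" using y by (auto simp: y1 PP_def)
      have ls: "length s = Suc N" using s by (simp add: perms_iff)
      have f1: "1 \<le> f" "f \<le> Suc N" "s ! (f - 1) = f" using f ls by (auto simp: Fx_def)
      have dperm: "del s f \<in> perms N" by (rule del_perm[OF s(1) f1])
      have id: "ins (del s f) f = s" by (rule ins_del[OF s(1) f1])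
      have "dp (del s f) = \<sigma>" using dp_ins[OF dperm f1(1,2)] id s(2) by simp
      then have "(del s f, f) \<in> PP N \<times> {1..Suc N}" using dperm f1 by (simp add: PP_def)
      moreover have "y = h (del s f, f)" using id by (simp add: h_def y1)
      ultimately show "\<exists>x\<in>PP N \<times> {1..Suc N}. y = h x" by blast
    qed
    have "(\<Sum>(\<pi>, f)\<in>Sigma (PP (Suc N)) Fx. c \<pi> f) = (\<Sum>x\<in>PP N \<times> {1..Suc N}. (\<lambda>(\<pi>, f). c \<pi> f) (h x))"
      by (rule sum.reindex_bij_betw[OF bij, symmetric])
    also have "\<dots> = (\<Sum>(\<tau>, p)\<in>PP N \<times> {1..Suc N}. c (ins \<tau> p) p)"
      by (rule sum.cong) (auto simp: h_def)
    finally show ?thesis .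
  qed
  also have "\<dots> = (\<Sum>\<tau>\<in>PP N. \<Sum>p\<in>{1..Suc N}. (-1) ^ inversions \<tau> * qvar ^ (maj (ins \<tau> p) + fixge \<tau> p))"
  proof -
    have "(\<Sum>(\<tau>, p)\<in>PP N \<times> {1..Suc N}. c (ins \<tau> p) p)
        = (\<Sum>\<tau>\<in>PP N. \<Sum>p\<in>{1..Suc N}. c (ins \<tau> p) p)"
      by (rule sum.Sigma[symmetric]) (simp_all add: finite_PP)
    also have "\<dots> = (\<Sum>\<tau>\<in>PP N. \<Sum>p\<in>{1..Suc N}. (-1) ^ inversions \<tau> * qvar ^ (maj (ins \<tau> p) + fixge \<tau> p))"
    proof (rule sum.cong[OF refl], rule sum.cong[OF refl])
      fix \<tau> p assume \<tau>: "\<tau> \<in> PP N" and p: "p \<in> {1..Suc N}"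
      have t: "\<tau> \<in> perms N" using \<tau> by (simp add: PP_def)
      show "c (ins \<tau> p) p = (-1) ^ inversions \<tau> * qvar ^ (maj (ins \<tau> p) + fixge \<tau> p)"
        using Fx_ins_gt[OF t] sign_ins[OF t] p by (simp add: c_def wt_def power_add mult.commute mult.left_commute)
    qed
    finally show ?thesis .
  qed
  also have "\<dots> = (\<Sum>\<tau>\<in>PP N. (-1) ^ inversions \<tau> * (qvar ^ maj \<tau> * qint (Suc N)))"
  proof (rule sum.cong[OF refl])
    fix \<tau> assume "\<tau> \<in> PP N"
    then have t: "\<tau> \<in> perms N" by (simp add: PP_def)
    have "(\<Sum>p\<in>{1..Suc N}. (-1) ^ inversions \<tau> * qvar ^ (maj (ins \<tau> p) + fixge \<tau> p))
       = (-1) ^ inversions \<tau> * (\<Sum>p\<in>{1..Suc N}. qvar ^ (maj (ins \<tau> p) + fixge \<tau> p))"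
      by (rule sum_distrib_left[symmetric])
    then show "(\<Sum>p\<in>{1..Suc N}. (-1) ^ inversions \<tau> * qvar ^ (maj (ins \<tau> p) + fixge \<tau> p))
       = (-1) ^ inversions \<tau> * (qvar ^ maj \<tau> * qint (Suc N))" using key_sum[OF t] by simp
  qed
  also have "\<dots> = qint (Suc N) * AA N"
    unfolding AA_def wt_def sum_distrib_left by (rule sum.cong) (simp_all add: mult.commute mult.left_commute)
  finally show ?thesis .
qed

lemma AA_fact: "k \<le> n \<Longrightarrow> AA n * qfact k * qfact (n - k) = wt \<sigma> * qfact n"
proof (induction n)
  case 0 then show ?case using AA_base by (simp add: qfact_def)
next
  case (Suc N)
  show ?case
  proof (cases "k = Suc N")
    case True then show ?thesis using AA_base by (simp add: qfact_def)
  next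
    case False
    then have kN: "k \<le> N" using Suc.prems by simp
    have e: "qfact (Suc N - k) = qint (Suc N - k) * qfact (N - k)"
      using kN qfact_Suc[of "N - k"] by (simp add: Suc_diff_le)
    have "AA (Suc N) * qfact k * qfact (Suc N - k) = (qint (Suc N - k) * AA (Suc N)) * (qfact k * qfact (N - k))"
      unfolding e by (simp only: ac_simps)
    also have "\<dots> = qint (Suc N) * (AA N * qfact k * qfact (N - k))"
      unfolding AA_step[OF kN] by (simp only: ac_simps)
    also have "\<dots> = qint (Suc N) * (wt \<sigma> * qfact N)" using Suc.IH kN by simp
    also have "\<dots> = wt \<sigma> * qfact (Suc N)" by (simp only: qfact_Suc ac_simps)
    finally show ?thesis .
  qed
qed

lemma AA_final: "k \<le> n \<Longrightarrow> AA n = wt \<sigma> * qbinom n k"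
proof -
  assume kn: "k \<le> n"
  have "AA n * (qfact k * qfact (n - k)) = wt \<sigma> * qfact n"
    using AA_fact[OF kn] by (simp only: mult.assoc)
  also have "qfact n = G n k * (qfact k * qfact (n - k))"
    using G_fact[OF kn] by (simp only: mult.assoc)
  finally have "AA n * (qfact k * qfact (n - k)) = (wt \<sigma> * G n k) * (qfact k * qfact (n - k))"
    by (simp only: mult.assoc)
  moreover have "qfact k * qfact (n - k) \<noteq> 0" using qfact_nonzero by simp
  ultimately have "AA n = wt \<sigma> * G n k" by simp
  then show ?thesis using qbinom_G[OF kn] by simp
qed

end


theorem proposition2p6:
  fixes n k :: nat and \<sigma> :: "nat list"
  assumes "k \<le> n" and "\<sigma> \<in> derangements k"
  shows "(\<Sum>\<pi> \<in> {\<pi> \<in> perms n. dp \<pi> = \<sigma>}. (-1) ^ inversions \<pi> * qvar ^ maj \<pi>)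
         = (-1) ^ inversions \<sigma> * qvar ^ maj \<sigma> * qbinom n k"
proof -
  have "AA \<sigma> n = (\<Sum>\<pi> \<in> {\<pi> \<in> perms n. dp \<pi> = \<sigma>}. (-1) ^ inversions \<pi> * qvar ^ maj \<pi>)"
    by (simp add: AA_def[OF assms(2)] PP_def[OF assms(2)] wt_def[OF assms(2)])
  moreover have "wt \<sigma> = (-1) ^ inversions \<sigma> * qvar ^ maj \<sigma>" by (simp add: wt_def[OF assms(2)])
  ultimately show ?thesis using AA_final[OF assms(2) assms(1)] by simp
qed

end
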